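(* Assume $\mathsf G$ is semisimple and let $\mathfrak k$ be a toral $\mathsf H$-subalgebra of $\mathfrak g$. Then the map $\mathfrak k\to\mathfrak{gl}(\mathfrak m_{\mathfrak k}^\perp)$, $X\mapsto\mathrm{ad}(X)|_{\mathfrak m_{\mathfrak k}^\perp}$, is injective.
   Context: $\mathsf G$ compact Lie group, $\mathsf H\subset\mathsf G$ closed, $\mathsf G/\mathsf H$ compact, connected and almost effective. $Q$ is an $\mathrm{Ad}(\mathsf G)$-invariant inner product on $\mathfrak g$ and $\mathfrak m$ the $Q$-orthogonal complement of $\mathfrak h$. An $\mathsf H$-subalgebra is an $\mathrm{Ad}(\mathsf H)$-invariant Lie subalgebra $\mathfrak k$ with $\mathfrak h\subsetneq\mathfrak k\subsetneq\mathfrak g$; it is toral if $[\mathfrak k,\mathfrak k]\subset\mathfrak h$. For such $\mathfrak k$, $\mathfrak m_{\mathfrak k}=\mathfrak k\cap\mathfrak m$ (the $Q$-orthogonal complement of $\mathfrak h$ in $\mathfrak k$) and $\mathfrak m_{\mathfrak k}^\perp$ is the $Q$-orthogonal complement of $\mathfrak m_{\mathfrak k}$ in $\mathfrak m$; one has $[\mathfrak k,\mathfrak m_{\mathfrak k}^\perp]\subset\mathfrak m_{\mathfrak k}^\perp$. *)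

theory Defs
  imports "HOL-Analysis.Analysis"
begin

text \<open>A finite-dimensional real Lie algebra g is modelled as a Euclidean space type 'g
  with a Lie bracket br.  The inner product of the type plays the role of the
  Ad(G)-invariant inner product Q.\<close>

definition lie_bracket :: "('g::real_vector \<Rightarrow> 'g \<Rightarrow> 'g) \<Rightarrow> bool" where
  "lie_bracket br \<longleftrightarrow> bilinear br \<and> (\<forall>x. br x x = 0) \<and>
     (\<forall>x y z. br x (br y z) + br y (br z x) + br z (br x y) = 0)"

definition lie_subalgebra :: "('g::real_vector \<Rightarrow> 'g \<Rightarrow> 'g) \<Rightarrow> 'g set \<Rightarrow> bool" where
  "lie_subalgebra br S \<longleftrightarrow> subspace S \<and> (\<forall>x\<in>S. \<forall>y\<in>S. br x y \<in> S)"

definition lie_ideal :: "('g::real_vector \<Rightarrow> 'g \<Rightarrow> 'g) \<Rightarrow> 'g set \<Rightarrow> bool" where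
  "lie_ideal br I \<longleftrightarrow> subspace I \<and> (\<forall>x. \<forall>y\<in>I. br x y \<in> I)"

definition semisimple_lie :: "('g::real_vector \<Rightarrow> 'g \<Rightarrow> 'g) \<Rightarrow> bool" where
  "semisimple_lie br \<longleftrightarrow>
     (\<forall>I. lie_ideal br I \<and> (\<forall>x\<in>I. \<forall>y\<in>I. br x y = 0) \<longrightarrow> I = {0})"

text \<open>Ad-invariance of the inner product (infinitesimal form): ad X is skew.\<close>
definition ad_invariant_inner :: "('g::real_inner \<Rightarrow> 'g \<Rightarrow> 'g) \<Rightarrow> bool" where
  "ad_invariant_inner br \<longleftrightarrow> (\<forall>x y z. inner (br x y) z = - inner y (br x z))"

text \<open>Almost effectiveness of G/H on the Lie algebra level: h contains no nonzero ideal of g.\<close>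
definition almost_effective_lie :: "('g::real_vector \<Rightarrow> 'g \<Rightarrow> 'g) \<Rightarrow> 'g set \<Rightarrow> bool" where
  "almost_effective_lie br h \<longleftrightarrow> (\<forall>I. lie_ideal br I \<and> I \<subseteq> h \<longrightarrow> I = {0})"

definition adjoint_group :: "('g::real_inner \<Rightarrow> 'g \<Rightarrow> 'g) \<Rightarrow> 'g set \<Rightarrow> ('g \<Rightarrow> 'g) set \<Rightarrow> bool" where
  "adjoint_group br h AdH \<longleftrightarrow> id \<in> AdH \<and>
     (\<forall>\<phi>\<in>AdH. \<forall>\<psi>\<in>AdH. \<phi> \<circ> \<psi> \<in> AdH) \<and>
     (\<forall>\<phi>\<in>AdH. bij \<phi> \<and> inv \<phi> \<in> AdH \<and> linear \<phi> \<and>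
        (\<forall>x y. \<phi> (br x y) = br (\<phi> x) (\<phi> y)) \<and>
        (\<forall>x y. inner (\<phi> x) (\<phi> y) = inner x y) \<and> \<phi> ` h = h)"

definition H_subalgebra :: "('g::real_inner \<Rightarrow> 'g \<Rightarrow> 'g) \<Rightarrow> 'g set \<Rightarrow> ('g \<Rightarrow> 'g) set \<Rightarrow> 'g set \<Rightarrow> bool" where
  "H_subalgebra br h AdH k \<longleftrightarrow> lie_subalgebra br k \<and> (\<forall>\<phi>\<in>AdH. \<phi> ` k \<subseteq> k) \<and>
     h \<subset> k \<and> k \<subset> UNIV"

definition toral :: "('g::real_vector \<Rightarrow> 'g \<Rightarrow> 'g) \<Rightarrow> 'g set \<Rightarrow> 'g set \<Rightarrow> bool" where
  "toral br h k \<longleftrightarrow> (\<forall>x\<in>k. \<forall>y\<in>k. br x y \<in> h)"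

definition orth_in :: "'g::real_inner set \<Rightarrow> 'g set \<Rightarrow> 'g set" where
  "orth_in V S = {v\<in>V. \<forall>s\<in>S. inner s v = 0}"

end

theory Submission
  imports Defs
begin

lemma orth_UNIV: "orth_in UNIV S = orthogonal_comp S"
  by (auto simp: orth_in_def orthogonal_comp_def orthogonal_def)

lemma key_zero:
  fixes br :: "'g::euclidean_space \<Rightarrow> 'g \<Rightarrow> 'g"
    and h k :: "'g set"
  assumes lb: "lie_bracket br"
    and ai: "ad_invariant_inner br"
    and ss: "semisimple_lie br"
    and hs: "lie_subalgebra br h"
    and ae: "almost_effective_lie br h"
    and ks: "subspace k" and hk: "h \<subseteq> k"
    and tor: "toral br h k"
    and Yk: "Y \<in> k"
    and Yv: "\<And>v. v \<in> orth_in (orth_in UNIV h) (k \<inter> orth_in UNIV h) \<Longrightarrow> br Y v = 0"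
  shows "Y = 0"
proof -
  define m where "m = orth_in UNIV h"
  have bil: "bilinear br" and alt: "\<And>x. br x x = 0"
    and jac: "\<And>x y z. br x (br y z) + br y (br z x) + br z (br x y) = 0"
    using lb by (auto simp: lie_bracket_def)
  have skew: "\<And>x y z. inner (br x y) z = - inner y (br x z)"
    using ai by (auto simp: ad_invariant_inner_def)
  have anti: "br x y = - br y x" for x y
  proof -
    have "0 = br (x+y) (x+y)" using alt by simp
    also have "\<dots> = br x y + br y x"
      using alt[of x] alt[of y] by (simp only: bilinear_ladd[OF bil] bilinear_radd[OF bil]) simp
    finally show ?thesis by (metis add_eq_0_iff2 add.commute)
  qed
  have hsub: "subspace h" using hs by (simp add: lie_subalgebra_def)
  have hbr: "\<And>x y. x \<in> h \<Longrightarrow> y \<in> h \<Longrightarrow> br x y \<in> h" using hs by (simp add: lie_subalgebra_def)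
  have msub: "subspace m" unfolding m_def orth_UNIV by (rule subspace_orthogonal_comp)
  have mI: "\<And>z. z \<in> m \<longleftrightarrow> (\<forall>s\<in>h. inner s z = 0)" by (simp add: m_def orth_in_def)
  have hm: "h + m = UNIV" unfolding m_def orth_UNIV by (rule subspace_sum_orthogonal_comp[OF hsub])
  have hm0: "x \<in> h \<Longrightarrow> (\<And>u. u \<in> h \<Longrightarrow> inner u x = 0) \<Longrightarrow> x = 0" for x
    by (metis inner_eq_zero_iff)
  have step1: "br Y w = 0" if wm: "w \<in> m" for w
  proof -
    have kms: "subspace (k \<inter> m)" using ks msub by (simp add: subspace_inter)
    obtain a b where a: "a \<in> span (k \<inter> m)" and b: "\<And>u. u \<in> span (k \<inter> m) \<Longrightarrow> orthogonal b u"
      and wab: "w = a + b"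
      using orthogonal_subspace_decomp_exists[of "k \<inter> m" w] by blast
    have a': "a \<in> k \<inter> m" using a kms by (metis span_eq_iff)
    have "b = w - a" using wab by simp
    hence bm: "b \<in> m" using wm a' msub by (simp add: subspace_diff)
    have "b \<in> orth_in m (k \<inter> m)"
      unfolding orth_in_def
    proof (intro CollectI conjI ballI)
      show "b \<in> m" by (rule bm)
    next
      fix u assume "u \<in> k \<inter> m"
      hence "orthogonal b u" using b span_base by blast
      thus "inner u b = 0" by (simp add: orthogonal_def inner_commute)
    qed
    hence "br Y b = 0" using Yv by (simp add: m_def)
    hence e: "br Y w = br Y a" using wab by (simp add: bilinear_radd[OF bil])
    have inh: "br Y a \<in> h" using tor Yk a' by (auto simp: toral_def)
    have "inner u (br Y a) = 0" if "u \<in> h" for u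
    proof -
      have "br Y u \<in> h" using tor Yk that hk by (auto simp: toral_def)
      hence "inner (br Y u) a = 0" using a' mI by auto
      thus ?thesis using skew[of Y a u] by (simp add: inner_commute)
    qed
    hence "br Y a = 0" using hm0 inh by blast
    thus ?thesis using e by simp
  qed
  define s where "s = {z. \<forall>A. lie_subalgebra br A \<and> m \<subseteq> A \<longrightarrow> z \<in> A}"
  have s_in: "s \<subseteq> A" if "lie_subalgebra br A" "m \<subseteq> A" for A
    using that s_def by auto
  have s_alg: "lie_subalgebra br s"
    unfolding lie_subalgebra_def subspace_def
  proof (intro conjI ballI allI)
    show "0 \<in> s" unfolding s_def lie_subalgebra_def by (simp add: subspace_0)
  next
    fix x y assume "x \<in> s" "y \<in> s"
    thus "x + y \<in> s" unfolding s_def lie_subalgebra_def by (simp add: subspace_add)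
  next
    fix c x assume "x \<in> s"
    thus "c *\<^sub>R x \<in> s" unfolding s_def lie_subalgebra_def by (simp add: subspace_scale)
  next
    fix x y assume "x \<in> s" "y \<in> s"
    thus "br x y \<in> s" unfolding s_def lie_subalgebra_def by simp
  qed
  have ms: "m \<subseteq> s" unfolding s_def by auto
  have s_sub: "subspace s" using s_alg by (simp add: lie_subalgebra_def)
  have s_br: "\<And>x y. x \<in> s \<Longrightarrow> y \<in> s \<Longrightarrow> br x y \<in> s" using s_alg by (simp add: lie_subalgebra_def)
  define s' where "s' = {z \<in> s. \<forall>x\<in>h. br x z \<in> s}"
  have "lie_subalgebra br s'"
    unfolding lie_subalgebra_def subspace_def
  proof (intro conjI ballI allI)
    show "0 \<in> s'" unfolding s'_def using s_sub
      by (simp add: subspace_0 bilinear_rzero[OF bil])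
  next
    fix x y assume "x \<in> s'" "y \<in> s'"
    thus "x + y \<in> s'" unfolding s'_def using s_sub
      by (simp add: subspace_add bilinear_radd[OF bil])
  next
    fix c x assume "x \<in> s'"
    thus "c *\<^sub>R x \<in> s'" unfolding s'_def using s_sub
      by (simp add: subspace_scale bilinear_rmul[OF bil])
  next
    fix a b assume as: "a \<in> s'" and bs: "b \<in> s'"
    have "br a b \<in> s" using as bs s_br by (simp add: s'_def)
    moreover have "br x (br a b) \<in> s" if xh: "x \<in> h" for x
    proof -
      have "br x (br a b) = br a (br x b) + br (br x a) b"
      proof -
        have e1: "br a (br b x) = - br a (br x b)" by (simp add: anti[of b x] bilinear_rneg[OF bil])
        have e2: "br b (br x a) = - br (br x a) b" by (rule anti)
        have "br x (br a b) + - br a (br x b) + - br (br x a) b = 0"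
          using jac[of x a b] unfolding e1 e2 .
        thus ?thesis by (simp add: algebra_simps eq_diff_eq)
      qed
      moreover have "br a (br x b) \<in> s" using as bs xh s_br by (simp add: s'_def)
      moreover have "br (br x a) b \<in> s" using as bs xh s_br by (simp add: s'_def)
      ultimately show ?thesis using s_sub by (simp add: subspace_add)
    qed
    ultimately show "br a b \<in> s'" by (simp add: s'_def)
  qed
  moreover have "m \<subseteq> s'"
  proof
    fix z assume zm: "z \<in> m"
    have "br x z \<in> m" if "x \<in> h" for x
      unfolding mI
    proof
      fix u assume "u \<in> h"
      hence "br x u \<in> h" using hbr that by simp
      hence "inner (br x u) z = 0" using zm mI by auto
      thus "inner u (br x z) = 0" using skew[of x z u] by (simp add: inner_commute)
    qed
    thus "z \<in> s'" using zm ms by (auto simp: s'_def)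
  qed
  ultimately have "s \<subseteq> s'" using s_in by blast
  hence sh: "\<And>x z. x \<in> h \<Longrightarrow> z \<in> s \<Longrightarrow> br x z \<in> s" by (auto simp: s'_def)
  have sideal: "br x z \<in> s" if "z \<in> s" for x z
  proof -
    obtain x1 x2 where "x1 \<in> h" "x2 \<in> m" "x = x1 + x2"
      using hm by (metis UNIV_I set_plus_elim)
    thus ?thesis using sh[of x1 z] s_br[of x2 z] ms that s_sub
      by (auto simp: bilinear_ladd[OF bil] subspace_add)
  qed
  define T where "T = orthogonal_comp s"
  have "lie_ideal br T"
    unfolding lie_ideal_def
  proof (intro conjI allI ballI)
    show "subspace T" by (simp add: T_def subspace_orthogonal_comp)
  next
    fix x y assume "y \<in> T"
    thus "br x y \<in> T"
      unfolding T_def orthogonal_comp_def orthogonal_def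
    proof (intro CollectI ballI)
      fix z assume "z \<in> s"
      hence "br x z \<in> s" by (rule sideal)
      hence "inner (br x z) y = 0" using \<open>y \<in> T\<close> by (auto simp: T_def orthogonal_comp_def orthogonal_def)
      hence "inner (br x y) z = 0" using skew[of x y z] by (simp add: inner_commute)
      thus "inner z (br x y) = 0" by (simp add: inner_commute)
    qed
  qed
  moreover have "T \<subseteq> h"
  proof -
    have "T \<subseteq> orthogonal_comp m" unfolding T_def by (rule orthogonal_comp_anti_mono[OF ms])
    also have "\<dots> = h" unfolding m_def orth_UNIV by (rule orthogonal_comp_self[OF hsub])
    finally show ?thesis .
  qed
  ultimately have "T = {0}" using ae by (auto simp: almost_effective_lie_def)
  hence "s = UNIV" using orthogonal_comp_self[OF s_sub] by (simp add: T_def)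
  moreover have "lie_subalgebra br {z. br Y z = 0}"
    unfolding lie_subalgebra_def subspace_def
  proof (intro conjI ballI allI)
    fix a b assume "a \<in> {z. br Y z = 0}" "b \<in> {z. br Y z = 0}"
    hence a: "br Y a = 0" and b: "br Y b = 0" by auto
    have "br b Y = 0" using anti[of b Y] b by simp
    hence "br Y (br a b) = - br b (br Y a)"
      using jac[of Y a b] by (simp add: bilinear_rzero[OF bil] algebra_simps add_eq_0_iff2)
    thus "br a b \<in> {z. br Y z = 0}" using a by (simp add: bilinear_rzero[OF bil])
  qed (auto simp: bilinear_rzero[OF bil] bilinear_radd[OF bil] bilinear_rmul[OF bil])
  moreover have "m \<subseteq> {z. br Y z = 0}" using step1 by auto
  ultimately have Yc: "\<And>z. br Y z = 0" using s_in by blast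
  define I where "I = range (\<lambda>c. c *\<^sub>R Y)"
  have "lie_ideal br I"
    unfolding lie_ideal_def
  proof (intro conjI allI ballI)
    have "I = span {Y}" unfolding I_def by (auto simp: span_singleton)
    thus "subspace I" by simp
  next
    fix x y assume "y \<in> I"
    then obtain c where "y = c *\<^sub>R Y" by (auto simp: I_def)
    hence "br x y = 0" using anti[of x Y] Yc by (simp add: bilinear_rmul[OF bil])
    thus "br x y \<in> I" unfolding I_def by (metis rangeI scaleR_zero_left)
  qed
  moreover have "\<forall>x\<in>I. \<forall>y\<in>I. br x y = 0"
    using Yc by (auto simp: I_def bilinear_lmul[OF bil])
  ultimately have "I = {0}" using ss by (auto simp: semisimple_lie_def)
  moreover have "Y \<in> I" unfolding I_def by (metis rangeI scaleR_one)
  ultimately show ?thesis by simp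
qed

theorem mainTheorem8:
  fixes br :: "'g::euclidean_space \<Rightarrow> 'g \<Rightarrow> 'g"
    and h k :: "'g set" and AdH :: "('g \<Rightarrow> 'g) set"
  assumes "lie_bracket br"
    and "ad_invariant_inner br"
    and "semisimple_lie br"
    and "lie_subalgebra br h"
    and "almost_effective_lie br h"
    and "adjoint_group br h AdH"
    and "H_subalgebra br h AdH k"
    and "toral br h k"
  shows "inj_on (\<lambda>X. restrict (br X) (orth_in (orth_in UNIV h) (k \<inter> orth_in UNIV h))) k"
proof (rule inj_onI)
  fix X X' assume X: "X \<in> k" and X': "X' \<in> k"
    and eq: "restrict (br X) (orth_in (orth_in UNIV h) (k \<inter> orth_in UNIV h)) =
             restrict (br X') (orth_in (orth_in UNIV h) (k \<inter> orth_in UNIV h))"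
  have bil: "bilinear br" using assms(1) by (simp add: lie_bracket_def)
  have ks: "subspace k" and hk: "h \<subseteq> k" using assms(7)
    by (auto simp: H_subalgebra_def lie_subalgebra_def)
  have "X - X' = 0"
  proof (rule key_zero[OF assms(1-5) ks hk assms(8)])
    show "X - X' \<in> k" using X X' ks by (simp add: subspace_diff)
  next
    fix v assume v: "v \<in> orth_in (orth_in UNIV h) (k \<inter> orth_in UNIV h)"
    have "br X v = br X' v" using fun_cong[OF eq, of v] v by simp
    thus "br (X - X') v = 0" by (simp add: bilinear_lsub[OF bil])
  qed
  thus "X = X'" by simp
qed

end
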